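(* Let $\gamma\in\mathbb{R}$ and $1<p<+\infty$. There exists a constant $C>0$ such that, whenever $\omega\in C(\mathbb{R}_+\times\mathbb{R}_+,[0,+\infty))$ is such that every $u\in C^\infty_c(\mathbb{R}_+)$ satisfies, for almost every $x,y\in\mathbb{R}_+$, \[ |u(x)-u(y)|\le\omega(x,y)\Big(\int_{\mathbb{R}_+}|u'(z)|^pz^\gamma\,dz\Big)^{1/p}, \] then for all $x,y\in\mathbb{R}_+$, $\omega(x,y)\ge C\,\Theta_{1-\frac1p,\,1-\frac1p,\,1-\frac{1+\gamma}{p}}(x,y)$.
   Context: $\mathbb{R}_+=(0,+\infty)$ (the case $n=1$ of $\mathbb{R}^n_+$, so $x_n=x$). For $\alpha>0$, $\beta,\kappa\in\mathbb{R}$ and $x,y\in\mathbb{R}_+$: $\Theta_{\alpha,\beta,\kappa}(x,y)=\frac{|x-y|^\beta}{\min(x,y)^{-\kappa}\max(x,y,|x-y|)^\beta}$ if $\kappa<0$; $=\big(\ln(1+(|x-y|/\min(x,y))^{\beta/\alpha})\big)^\alpha$ if $\kappa=0$; $=\frac{|x-y|^\beta}{\max(x,y,|x-y|)^{\beta-\kappa}}$ if $0<\kappa<1+\beta-\alpha$; $=\frac{\max(x,y)^\kappa|x-y|^\beta}{\max(x,y,|x-y|)^\beta}$ if $\kappa\ge 1+\beta-\alpha$. *)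

theory Defs
  imports "HOL-Analysis.Analysis"
begin

definition Theta :: "real \<Rightarrow> real \<Rightarrow> real \<Rightarrow> real \<Rightarrow> real \<Rightarrow> real" where
  "Theta \<alpha> \<beta> \<kappa> x y =
     (if \<kappa> < 0 then
        \<bar>x - y\<bar> powr \<beta> / (min x y powr (- \<kappa>) * max (max x y) \<bar>x - y\<bar> powr \<beta>)
      else if \<kappa> = 0 then
        (ln (1 + (\<bar>x - y\<bar> / min x y) powr (\<beta> / \<alpha>))) powr \<alpha>
      else if \<kappa> < 1 + \<beta> - \<alpha> then
        \<bar>x - y\<bar> powr \<beta> / max (max x y) \<bar>x - y\<bar> powr (\<beta> - \<kappa>)
      else
        max x y powr \<kappa> * \<bar>x - y\<bar> powr \<beta> / max (max x y) \<bar>x - y\<bar> powr \<beta>)"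

definition smooth_fun :: "(real \<Rightarrow> real) \<Rightarrow> bool" where
  "smooth_fun u \<longleftrightarrow> (\<forall>k x. ((deriv ^^ k) u) differentiable (at x))"

definition Cc_inf_pos :: "(real \<Rightarrow> real) set" where
  "Cc_inf_pos = {u. smooth_fun u \<and>
      (\<exists>a b. 0 < a \<and> a \<le> b \<and> (\<forall>x. x \<notin> {a..b} \<longrightarrow> u x = 0))}"

end

theory Submission
  imports Defs "HOL-Computational_Algebra.Polynomial"
begin

lemma exp_ge_pow_fact:
  fixes x :: real assumes "0 \<le> x"
  shows "x ^ m / fact m \<le> exp x"
proof -
  have s1: "(\<lambda>k. if k = m then x ^ m / fact m else 0) sums (x ^ m / fact m)"
    by (rule sums_single)
  have s2: "(\<lambda>k. x ^ k / fact k) sums exp x"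
    using exp_converges[of x] by (simp add: divide_inverse_commute scaleR_conv_of_real)
  show ?thesis
    by (rule sums_le[OF _ s1 s2]) (use assms in auto)
qed

definition Fb :: "real poly \<Rightarrow> nat \<Rightarrow> real \<Rightarrow> real" where
  "Fb P n s = (if 0 < s \<and> s < 1 then poly P s / (s*(1-s))^n * exp (-1/(s*(1-s))) else 0)"

definition Qd :: "real poly \<Rightarrow> nat \<Rightarrow> real poly" where
  "Qd P n = pderiv P * [:0,1,-1:]^2 - smult (real n) (P * [:0,1,-1:] * [:1,-2:]) + P * [:1,-2:]"

lemma poly_Qd: "poly (Qd P n) s = poly (pderiv P) s * (s*(1-s))^2
   - real n * poly P s * (s*(1-s)) * (1-2 * s) + poly P s * (1-2 * s)"
  by (simp add: Qd_def algebra_simps power2_eq_square)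

lemma alg1:
  fixes q e A B L :: real assumes q: "q > 0"
  shows "(A*q^n - B*(real n*q^(n-1)*L))/(q^n)^2 * e + B/q^n*(e*(L/q^2))
     = (A*q^2 - real n*B*q*L + B*L)/q^(n+2)*e"
proof (cases n)
  case 0 then show ?thesis using q by (simp add: field_simps power2_eq_square)
next
  case (Suc m)
  then show ?thesis using q by (simp add: field_simps power2_eq_square)
qed

lemma Fb_deriv_in:
  assumes "0 < s" "s < 1"
  shows "(Fb P n has_real_derivative Fb (Qd P n) (n+2) s) (at s)"
proof -
  define q where "q = s*(1-s)"
  have q: "q > 0" using assms by (simp add: q_def)
  have d1: "((\<lambda>s. s*(1-s)) has_real_derivative (1 - 2 * s)) (at s)"
    by (auto intro!: derivative_eq_intros)
  have d2: "((\<lambda>s. (s*(1-s))^n) has_real_derivative (real n * q^(n-1) * (1 - 2 * s))) (at s)"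
    using DERIV_power[OF d1, of n] by (simp add: q_def mult_ac)
  have d3: "((\<lambda>s. exp (-1/(s*(1-s)))) has_real_derivative exp (-1/q) * ((1 - 2 * s)/q^2)) (at s)"
    using q unfolding q_def
    apply (auto intro!: derivative_eq_intros)
    apply (simp add: divide_simps power2_eq_square)
    apply (simp add: algebra_simps)
    done
  have d4: "((\<lambda>s. poly P s / (s*(1-s))^n) has_real_derivative
      (poly (pderiv P) s * q^n - poly P s * (real n * q^(n-1) * (1 - 2 * s))) / (q^n)^2) (at s)"
    using DERIV_divide[OF poly_DERIV d2, of P] q assms by (simp add: q_def power2_eq_square)
  have d5: "((\<lambda>s. poly P s / (s*(1-s))^n * exp (-1/(s*(1-s)))) has_real_derivative
      (poly (pderiv P) s * q^n - poly P s * (real n * q^(n-1) * (1 - 2 * s))) / (q^n)^2 * exp (-1/q)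
      + poly P s / q^n * (exp (-1/q) * ((1 - 2 * s)/q^2))) (at s)"
    using DERIV_mult[OF d4 d3] by (simp only: q_def mult.commute)
  have eq: "(poly (pderiv P) s * q^n - poly P s * (real n * q^(n-1) * (1 - 2 * s))) / (q^n)^2 * exp (-1/q)
      + poly P s / q^n * (exp (-1/q) * ((1 - 2 * s)/q^2)) = Fb (Qd P n) (n+2) s"
    unfolding Fb_def poly_Qd using assms alg1[OF q] by (simp add: q_def)
  show ?thesis
    apply (rule has_field_derivative_transform_within_open[of _ _ _ "{0<..<1}"])
    using d5 eq apply simp
    using assms by (auto simp: Fb_def)
qed

lemma Fb_bound:
  "\<exists>K\<ge>0. \<forall>t. 0 < t \<and> t < 1 \<longrightarrow> \<bar>Fb P n t\<bar> \<le> K * (t*(1-t))^2"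
proof -
  have "compact (poly P ` {0..1})"
    by (intro compact_continuous_image continuous_intros) auto
  then obtain B where B: "\<And>t. t \<in> {0..1} \<Longrightarrow> \<bar>poly P t\<bar> \<le> B"
    using compact_imp_bounded bounded_iff by (metis image_eqI real_norm_def)
  have B0: "B \<ge> 0" using B[of 0] by simp
  show ?thesis
  proof (intro exI[of _ "B * fact (n+2)"] conjI allI impI)
    show "0 \<le> B * fact (n+2)" using B0 by simp
    fix t :: real assume t: "0 < t \<and> t < 1"
    define q where "q = t*(1-t)"
    have q: "q > 0" using t by (simp add: q_def)
    have "(1/q)^(n+2) / fact (n+2) \<le> exp (1/q)"
      by (rule exp_ge_pow_fact) (use q in simp)
    then have h: "1 / (q^(n+2) * fact (n+2)) \<le> exp (1/q)"
      by (simp add: power_one_over)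
    have pos: "0 < q^(n+2) * fact (n+2)" using q by simp
    have h2: "1 \<le> exp (1/q) * (q^(n+2) * fact (n+2))"
      using h pos by (simp add: divide_le_eq)
    have "exp (-1/q) = 1 / exp (1/q)" by (simp add: exp_minus divide_inverse)
    also have "\<dots> \<le> fact (n+2) * q^(n+2)"
      using h2 by (simp add: divide_le_eq mult_ac)
    finally have e: "exp (-1/q) \<le> fact (n+2) * q^(n+2)" .
    have "\<bar>Fb P n t\<bar> = \<bar>poly P t\<bar> / q^n * exp (-1/q)"
      using t q by (simp add: Fb_def q_def abs_mult)
    also have "\<dots> \<le> B / q^n * (fact (n+2) * q^(n+2))"
      using B[of t] t q e B0
      by (intro mult_mono divide_right_mono) auto
    also have "\<dots> = B * fact (n+2) * q^2"
      using q by (simp add: power_add field_simps power2_eq_square del: fact_Suc)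
    finally show "\<bar>Fb P n t\<bar> \<le> B * fact (n+2) * (t*(1-t))^2" by (simp add: q_def)
  qed
qed

lemma Fb_deriv_out:
  assumes "\<not> (0 < s \<and> s < 1)"
  shows "(Fb P n has_real_derivative 0) (at s)"
proof -
  obtain K where K: "K \<ge> 0" "\<And>t. 0 < t \<and> t < 1 \<Longrightarrow> \<bar>Fb P n t\<bar> \<le> K * (t*(1-t))^2"
    using Fb_bound by blast
  have s0: "Fb P n s = 0" using assms by (auto simp: Fb_def)
  have le: "norm ((Fb P n y - Fb P n s) / (y - s)) \<le> K * \<bar>y - s\<bar>" if "y \<noteq> s" for y
  proof (cases "0 < y \<and> y < 1")
    case True
    have sq: "0 \<le> y*y" "0 \<le> (1-y)*(1-y)" by simp_all
    have e1: "y*(1-y) = y - y*y" "(1-y)*(1-y) = 1 - 2*y + y*y" by (simp_all add: algebra_simps)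
    have q1: "y*(1-y) \<le> \<bar>y - s\<bar>"
    proof (cases "s \<le> 0")
      case True then show ?thesis using e1 sq by linarith
    next
      case False then have "s \<ge> 1" using assms \<open>0 < y \<and> y < 1\<close> by linarith
      then show ?thesis using e1 sq \<open>0 < y \<and> y < 1\<close> by linarith
    qed
    have q0: "0 \<le> y*(1-y)" using True by simp
    have "\<bar>Fb P n y\<bar> \<le> K * (y - s)^2"
      using K(2)[OF True] mult_left_mono[OF power_mono[OF q1 q0, of 2] K(1)] by simp
    then show ?thesis using that s0
      by (simp add: abs_divide divide_le_eq power2_eq_square mult_ac abs_mult)
  next
    case False
    then have "Fb P n y = 0" by (auto simp: Fb_def)
    then show ?thesis using K s0 by simp
  qed
  have "((\<lambda>y. (Fb P n y - Fb P n s) / (y - s)) \<longlongrightarrow> 0) (at s)"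
  proof (rule Lim_null_comparison)
    show "\<forall>\<^sub>F y in at s. norm ((Fb P n y - Fb P n s) / (y - s)) \<le> K * \<bar>y - s\<bar>"
      using le by (auto simp: eventually_at_filter)
    have "((\<lambda>y. K * \<bar>y - s\<bar>) \<longlongrightarrow> K * \<bar>s - s\<bar>) (at s)"
      by (intro tendsto_intros)
    then show "((\<lambda>y. K * \<bar>y - s\<bar>) \<longlongrightarrow> 0) (at s)" by simp
  qed
  then show ?thesis by (simp add: has_field_derivative_iff)
qed

lemma Fb_deriv: "(Fb P n has_real_derivative Fb (Qd P n) (n+2) s) (at s)"
proof (cases "0 < s \<and> s < 1")
  case True then show ?thesis using Fb_deriv_in by blast
next
  case False
  have "Fb (Qd P n) (n+2) s = 0" using False by (auto simp: Fb_def)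
  then show ?thesis using Fb_deriv_out[OF False] by simp
qed

lemma deriv_Fb: "deriv (Fb P n) = Fb (Qd P n) (n+2)"
  using Fb_deriv DERIV_imp_deriv by blast

lemma Fb_bounded: "\<exists>K. \<forall>t. \<bar>Fb P n t\<bar> \<le> K"
proof -
  obtain K where K: "K \<ge> 0" "\<And>t. 0 < t \<and> t < 1 \<Longrightarrow> \<bar>Fb P n t\<bar> \<le> K * (t*(1-t))^2"
    using Fb_bound by blast
  have "\<bar>Fb P n t\<bar> \<le> K" for t
  proof (cases "0 < t \<and> t < 1")
    case True
    have "(t*(1-t))^2 \<le> 1" using True by (intro power_le_one) (auto simp: mult_le_one)
    then show ?thesis using K(2)[OF True] mult_left_mono[OF _ K(1)] by fastforce
  qed (use K in \<open>auto simp: Fb_def\<close>)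
  then show ?thesis by blast
qed


lemma Fb_add: "Fb P n s + Fb R n s = Fb (P + R) n s"
  by (simp add: Fb_def add_divide_distrib distrib_right)

lemma Fb_smult: "a * Fb P n s = Fb (smult a P) n s"
  by (simp add: Fb_def)

lemma Fb_lift2: "Fb P n s = Fb (P * [:0,1,-1:]^2) (n+2) s"
proof (cases "0 < s \<and> s < 1")
  case True
  then have q: "s*(1-s) > 0" by simp
  have "poly ([:0,1,-1:]^2) s = (s*(1-s))^2" by (simp add: algebra_simps power2_eq_square)
  have gen: "x * q^2 / q^(n+2) = x / q^n" if "q > 0" for x q :: real
    using that by (simp add: power_add power2_eq_square field_simps)
  have "poly P s * (s*(1-s))^2 / (s*(1-s))^(n+2) = poly P s / (s*(1-s))^n"
    by (rule gen[OF q])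
  then show ?thesis using True by (simp add: Fb_def)
qed (auto simp: Fb_def)

definition Gf :: "real \<Rightarrow> real \<Rightarrow> real poly \<Rightarrow> nat \<Rightarrow> real \<Rightarrow> real \<Rightarrow> real" where
  "Gf c w P n m t = (if t > 0 then Fb P n ((ln t - c)/w) * t powr m else 0)"

definition GD :: "real \<Rightarrow> real poly \<Rightarrow> nat \<Rightarrow> real \<Rightarrow> real poly" where
  "GD w P n m = smult (1/w) (Qd P n) + smult m (P * [:0,1,-1:]^2)"

lemma Gf_deriv:
  assumes w: "w > 0"
  shows "(Gf c w P n m has_real_derivative Gf c w (GD w P n m) (n+2) (m-1) t) (at t)"
proof (cases "t > 0")
  case True
  define s where "s = (ln t - c)/w"
  have ds: "((\<lambda>t. (ln t - c)/w) has_real_derivative 1/(w*t)) (at t)"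
    using True w by (auto intro!: derivative_eq_intros simp: field_simps)
  have d1: "((\<lambda>t. Fb P n ((ln t - c)/w)) has_real_derivative Fb (Qd P n) (n+2) s * (1/(w*t))) (at t)"
    using DERIV_chain2[OF Fb_deriv ds] by (simp add: s_def)
  have d2: "((\<lambda>t. t powr m) has_real_derivative m * t powr (m-1)) (at t)"
    by (rule has_real_derivative_powr[OF True])
  have d3: "((\<lambda>t. Fb P n ((ln t - c)/w) * t powr m) has_real_derivative
      Fb (Qd P n) (n+2) s * (1/(w*t)) * t powr m + m * t powr (m-1) * Fb P n s) (at t)"
    using DERIV_mult[OF d1 d2] by (simp only: s_def)
  have tp: "t powr m = t * t powr (m-1)" using True by (simp add: powr_diff)
  have "Fb (Qd P n) (n+2) s * (1/(w*t)) * t powr m + m * t powr (m-1) * Fb P n s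
      = (1/w * Fb (Qd P n) (n+2) s + m * Fb P n s) * t powr (m-1)"
    unfolding tp using True w by (simp add: field_simps)
  also have "\<dots> = (1/w * Fb (Qd P n) (n+2) s + m * Fb (P * [:0,1,-1:]^2) (n+2) s) * t powr (m-1)"
    by (subst Fb_lift2[of P n s]) (rule refl)
  also have "\<dots> = Gf c w (GD w P n m) (n+2) (m-1) t"
  proof -
    have "1/w * Fb (Qd P n) (n+2) s + m * Fb (P * [:0,1,-1:]^2) (n+2) s = Fb (GD w P n m) (n+2) s"
      unfolding GD_def Fb_smult Fb_add by (rule refl)
    then show ?thesis using True by (simp add: Gf_def s_def)
  qed
  finally have eq: "Fb (Qd P n) (n+2) s * (1/(w*t)) * t powr m + m * t powr (m-1) * Fb P n s
      = Gf c w (GD w P n m) (n+2) (m-1) t" .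
  show ?thesis
    apply (rule has_field_derivative_transform_within_open[of _ _ _ "{0<..}"])
    using d3 eq True by (auto simp: Gf_def)
next
  case False
  have z: "Gf c w (GD w P n m) (n+2) (m-1) t = 0" using False by (simp add: Gf_def)
  have loc: "0 = Gf c w P n m x" if "x \<in> {..<exp c}" for x
  proof (cases "x > 0")
    case True
    then have "ln x < ln (exp c)" using that by (subst ln_less_cancel_iff) auto
    then have "ln x < c" by simp
    then have "(ln x - c)/w \<le> 0" using w by (simp add: divide_nonpos_pos)
    then show ?thesis using True by (simp add: Gf_def Fb_def)
  qed (simp add: Gf_def)
  have "((\<lambda>x. 0) has_real_derivative 0) (at t)" by simp
  then show ?thesis unfolding z
    apply (rule has_field_derivative_transform_within_open[of _ _ _ "{..<exp c}"])
    using False loc le_less_trans[OF _ exp_gt_zero[of c], of t] by auto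
qed

lemma deriv_Gf: "w > 0 \<Longrightarrow> deriv (Gf c w P n m) = Gf c w (GD w P n m) (n+2) (m-1)"
  using Gf_deriv DERIV_imp_deriv by blast

lemma Gf_iter: "w > 0 \<Longrightarrow> \<exists>P' n' m'. (deriv ^^ k) (Gf c w P n m) = Gf c w P' n' m'"
proof (induction k)
  case 0 then show ?case by auto
next
  case (Suc k)
  then obtain P' n' m' where "(deriv ^^ k) (Gf c w P n m) = Gf c w P' n' m'" by blast
  then show ?case using deriv_Gf[OF Suc.prems] by auto
qed

lemma Gf_smooth: "w > 0 \<Longrightarrow> smooth_fun (Gf c w P n m)"
  unfolding smooth_fun_def
proof (intro allI)
  fix k x assume w: "w > 0"
  obtain P' n' m' where "(deriv ^^ k) (Gf c w P n m) = Gf c w P' n' m'" using Gf_iter[OF w] by blast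
  then show "(deriv ^^ k) (Gf c w P n m) differentiable at x"
    using Gf_deriv[OF w] real_differentiable_def by metis
qed


definition M0 :: real where "M0 = max 1 (SOME K. \<forall>t. \<bar>Fb (Qd 1 0) 2 t\<bar> \<le> K)"

lemma M0: "1 \<le> M0" "\<bar>Fb (Qd 1 0) 2 t\<bar> \<le> M0"
proof -
  have "\<forall>t. \<bar>Fb (Qd 1 0) 2 t\<bar> \<le> (SOME K. \<forall>t. \<bar>Fb (Qd 1 0) 2 t\<bar> \<le> K)"
    using someI_ex[OF Fb_bounded[of "Qd 1 0" 2]] .
  then show "1 \<le> M0" "\<bar>Fb (Qd 1 0) 2 t\<bar> \<le> M0" unfolding M0_def by (auto intro: le_max_iff_disj[THEN iffD2])
qed

lemma Gf_zero_out:
  assumes w: "w > 0" and t: "t \<notin> {exp c<..<exp (c+w)}"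
  shows "Gf c w P n m t = 0"
proof (cases "t > 0")
  case True
  have "\<not> (0 < (ln t - c)/w \<and> (ln t - c)/w < 1)"
  proof
    assume h: "0 < (ln t - c)/w \<and> (ln t - c)/w < 1"
    then have "c < ln t" "ln t < c + w" using w by (auto simp: field_simps)
    then have "exp c < t" "t < exp (c+w)" using True
      by (metis exp_less_cancel_iff exp_ln)+
    then show False using t by auto
  qed
  then show ?thesis by (auto simp: Gf_def Fb_def)
qed (simp add: Gf_def)

lemma u_facts:
  fixes c w :: real
  assumes w: "w > 0"
  defines "u \<equiv> Gf c w 1 0 0"
  shows "u \<in> Cc_inf_pos"
    and "continuous_on UNIV u"
    and "u (exp (c + w/2)) = exp (-4)"
    and "\<And>t. t \<notin> {exp c<..<exp (c+w)} \<Longrightarrow> u t = 0"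
    and "\<And>t. t \<notin> {exp c<..<exp (c+w)} \<Longrightarrow> deriv u t = 0"
    and "\<And>t. t > 0 \<Longrightarrow> \<bar>deriv u t\<bar> \<le> M0 / (w * t)"
    and "continuous_on UNIV (deriv u)"
proof -
  have sm: "smooth_fun u" unfolding u_def by (rule Gf_smooth[OF w])
  have du: "deriv u = Gf c w (GD w 1 0 0) 2 (-1)" unfolding u_def using deriv_Gf[OF w, of c 1 0 0] by (simp add: numeral_2_eq_2)
  show z: "\<And>t. t \<notin> {exp c<..<exp (c+w)} \<Longrightarrow> u t = 0" unfolding u_def by (rule Gf_zero_out[OF w])
  show "\<And>t. t \<notin> {exp c<..<exp (c+w)} \<Longrightarrow> deriv u t = 0" unfolding du by (rule Gf_zero_out[OF w])
  show "u \<in> Cc_inf_pos"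
  proof -
    have "u x = 0" if "x \<notin> {exp c..exp (c+w)}" for x
    proof -
      have "x \<notin> {exp c<..<exp (c+w)}" using that by auto
      then show ?thesis by (rule z)
    qed
    moreover have "exp c \<le> exp (c+w)" using w by simp
    ultimately show ?thesis unfolding Cc_inf_pos_def using sm
      by (intro CollectI conjI exI[of _ "exp c"] exI[of _ "exp (c+w)"]) auto
  qed
  show "continuous_on UNIV u"
    using sm unfolding smooth_fun_def
    by (metis continuous_at_imp_continuous_on differentiable_imp_continuous_within funpow_0)
  show "continuous_on UNIV (deriv u)"
  proof -
    have "\<forall>x. ((deriv ^^ 1) u) differentiable (at x)" using sm unfolding smooth_fun_def by blast
    then have "\<forall>x. deriv u differentiable (at x)" by simp
    then show ?thesis
      by (metis continuous_at_imp_continuous_on differentiable_imp_continuous_within)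
  qed
  have "(ln (exp (c + w/2)) - c)/w = 1/2" using w by simp
  then show "u (exp (c + w/2)) = exp (-4)"
    using w by (simp add: u_def Gf_def Fb_def)
  show "\<And>t. t > 0 \<Longrightarrow> \<bar>deriv u t\<bar> \<le> M0 / (w * t)"
  proof -
    fix t :: real assume t: "t > 0"
    have "deriv u t = Fb (smult (1/w) (Qd 1 0)) 2 ((ln t - c)/w) * t powr (-1)"
      using t by (simp add: du Gf_def GD_def)
    also have "\<dots> = (1/w) * Fb (Qd 1 0) 2 ((ln t - c)/w) / t"
      using t by (simp add: Fb_smult[symmetric] powr_minus divide_inverse)
    finally have "\<bar>deriv u t\<bar> = \<bar>Fb (Qd 1 0) 2 ((ln t - c)/w)\<bar> / (w * t)"
      using t w by (simp add: abs_mult abs_divide)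
    also have "\<dots> \<le> M0 / (w * t)"
      using M0(2) t w by (intro divide_right_mono) auto
    finally show "\<bar>deriv u t\<bar> \<le> M0 / (w * t)" .
  qed
qed


lemma integral_est:
  fixes c w p \<gamma> K :: real
  assumes w: "w > 0" and p: "p > 0"
    and K: "\<And>t. t \<in> {exp c..exp (c+w)} \<Longrightarrow> t powr (1 + \<gamma> - p) \<le> K"
  defines "u \<equiv> Gf c w 1 0 0"
  shows "0 \<le> integral {0<..} (\<lambda>t. \<bar>deriv u t\<bar> powr p * t powr \<gamma>)"
    and "integral {0<..} (\<lambda>t. \<bar>deriv u t\<bar> powr p * t powr \<gamma>) \<le> M0 powr p * w powr (1-p) * K"
proof -
  define a where "a = exp c"
  define b where "b = exp (c+w)"
  define g where "g = (\<lambda>t. \<bar>deriv u t\<bar> powr p * t powr \<gamma>)"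
  have a0: "a > 0" and ab: "a \<le> b" using w by (simp_all add: a_def b_def)
  have du0: "\<And>t. t \<notin> {exp c<..<exp (c+w)} \<Longrightarrow> deriv u t = 0"
    and dub: "\<And>t. t > 0 \<Longrightarrow> \<bar>deriv u t\<bar> \<le> M0 / (w * t)"
    and dc: "continuous_on UNIV (deriv u)"
    using u_facts[OF w, where c=c] unfolding u_def by blast+
  have g0: "g t = 0" if "t \<notin> {a..b}" for t
  proof -
    have "t \<notin> {exp c<..<exp (c+w)}" using that by (auto simp: a_def b_def)
    then show ?thesis using du0 p by (simp add: g_def)
  qed
  have gc: "continuous_on {a..b} g"
    unfolding g_def
  proof (intro continuous_on_mult continuous_on_powr' continuous_on_rabs continuous_on_id continuous_on_const)
    show "continuous_on {a..b} (deriv u)" using dc by (rule continuous_on_subset) auto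
    show "\<forall>x\<in>{a..b}. 0 \<le> \<bar>deriv u x\<bar> \<and> (\<bar>deriv u x\<bar> = 0 \<longrightarrow> 0 < p)" using p by auto
    show "\<forall>x\<in>{a..b}. 0 \<le> x \<and> (x = 0 \<longrightarrow> 0 < \<gamma>)" using a0 by auto
  qed
  have gi: "g integrable_on {a..b}" by (rule integrable_continuous_interval[OF gc])
  have gI: "(g has_integral integral {a..b} g) {0<..}"
    by (rule has_integral_on_superset[OF integrable_integral[OF gi]]) (use g0 a0 in auto)
  then have eqI: "integral {0<..} g = integral {a..b} g" by (rule integral_unique)
  have gnn: "\<And>t. 0 \<le> g t" by (simp add: g_def)
  show "0 \<le> integral {0<..} (\<lambda>t. \<bar>deriv u t\<bar> powr p * t powr \<gamma>)"
    using integral_nonneg[OF gi] gnn eqI by (simp add: g_def)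
  define h where "h = (\<lambda>t. (M0/w) powr p * K * (1/t))"
  have lnI: "((\<lambda>t. 1/t) has_integral (ln b - ln a)) {a..b}"
  proof (rule fundamental_theorem_of_calculus[OF ab])
    fix x assume "x \<in> {a..b}"
    then have "x > 0" using a0 by auto
    then have "(ln has_real_derivative 1/x) (at x within {a..b})"
      by (auto intro!: derivative_eq_intros)
    then show "(ln has_vector_derivative 1/x) (at x within {a..b})"
      by (simp add: has_real_derivative_iff_has_vector_derivative)
  qed
  have hI: "(h has_integral ((M0/w) powr p * K * (ln b - ln a))) {a..b}"
    unfolding h_def by (rule has_integral_mult_right[OF lnI])
  have gh: "g t \<le> h t" if t: "t \<in> {a..b}" for t
  proof -
    have t0: "t > 0" using t a0 by auto
    have "g t \<le> (M0/(w*t)) powr p * t powr \<gamma>"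
      unfolding g_def using dub[OF t0] p by (intro mult_right_mono powr_mono2) auto
    also have "\<dots> = (M0/w) powr p * (t powr (1 + \<gamma> - p) / t)"
    proof -
      have "(M0/(w*t)) powr p = (M0/w) powr p / t powr p"
        by (simp add: powr_divide[symmetric] divide_divide_eq_left)
      moreover have "t powr (1 + \<gamma> - p) / t = t powr \<gamma> / t powr p"
        using t0 by (simp add: powr_diff powr_add)
      ultimately show ?thesis by simp
    qed
    also have "\<dots> \<le> (M0/w) powr p * (K / t)"
      using K[of t] t t0 by (intro mult_left_mono divide_right_mono) (auto simp: a_def b_def)
    also have "\<dots> = h t" by (simp add: h_def)
    finally show ?thesis .
  qed
  have "integral {a..b} g \<le> integral {a..b} h"
    using gi hI gh by (intro integral_le) (auto simp: integrable_on_def)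
  also have "integral {a..b} h = (M0/w) powr p * K * w"
    using integral_unique[OF hI] by (simp add: a_def b_def)
  also have "\<dots> = M0 powr p * w powr (1-p) * K"
    using w by (simp add: powr_divide powr_diff)
  finally show "integral {0<..} (\<lambda>t. \<bar>deriv u t\<bar> powr p * t powr \<gamma>) \<le> M0 powr p * w powr (1-p) * K"
    using eqI by (simp add: g_def)
qed


lemma ae_open_contra:
  fixes F :: "real \<times> real \<Rightarrow> real"
  assumes S: "open S" and Fc: "continuous_on S F" and z0: "z0 \<in> S" "F z0 > 0"
    and ae: "AE z in lborel. z \<in> S \<longrightarrow> F z \<le> 0"
  shows False
proof -
  have "open (F -` {0<..} \<inter> S)" using continuous_on_open_vimage[OF S] Fc open_greaterThan by blast
  moreover have "z0 \<in> F -` {0<..} \<inter> S" using z0 by auto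
  ultimately obtain e where e: "e > 0" "ball z0 e \<subseteq> F -` {0<..} \<inter> S"
    by (rule openE) auto
  from ae obtain N where N: "{z \<in> space lborel. \<not> (z \<in> S \<longrightarrow> F z \<le> 0)} \<subseteq> N"
      "emeasure lborel N = 0" "N \<in> sets lborel"
    by (rule AE_E)
  have "ball z0 e \<subseteq> N"
  proof
    fix z assume "z \<in> ball z0 e"
    then have "z \<in> S" "F z > 0" using e(2) by auto
    then show "z \<in> N" using N(1) by auto
  qed
  then have "emeasure lborel (ball z0 e) \<le> emeasure lborel N"
    using N(3) by (rule emeasure_mono)
  then have "emeasure lborel (ball z0 e) = 0" using N(2) by simp
  then have "measure lborel (ball z0 e) = 0" by (simp add: measure_def)
  then show False using content_ball_pos[OF e(1), of z0] by simp
qed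

lemma Theta_sym: "Theta a b k x y = Theta a b k y x"
  unfolding Theta_def by (simp add: min.commute max.commute abs_minus_commute)

lemma ln_ineq_final:
  fixes T X p M k L :: real
  assumes "T > 0" "X > 0" "p > 0" "M > 0"
    and "ln T + ln X / p \<le> ln M + L"
  shows "T * X powr (1/p) \<le> M * exp L"
proof -
  have "T * X powr (1/p) = exp (ln T + ln X / p)"
    using assms by (simp add: powr_def exp_add)
  also have "\<dots> \<le> exp (ln M + L)" using assms(5) by simp
  also have "\<dots> = M * exp L" using assms by (simp add: exp_add)
  finally show ?thesis .
qed


lemma Theta_lt:
  fixes a b r k :: real
  assumes a: "0 < a" and ab: "a < b" and r: "r \<noteq> 0"
  shows "k < 0 \<Longrightarrow> Theta r r k a b = (b - a) powr r / (a powr (-k) * b powr r)"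
    and "k = 0 \<Longrightarrow> Theta r r k a b = (ln b - ln a) powr r"
    and "k > 0 \<Longrightarrow> ln (Theta r r k a b) = r * ln (b - a) + k * ln b - r * ln b"
proof -
  have mm: "min a b = a" "max a b = b" "\<bar>a - b\<bar> = b - a" "max b (b - a) = b"
    using a ab by auto
  show "k < 0 \<Longrightarrow> Theta r r k a b = (b - a) powr r / (a powr (-k) * b powr r)"
    by (simp add: Theta_def mm)
  show "k = 0 \<Longrightarrow> Theta r r k a b = (ln b - ln a) powr r"
  proof -
    assume k: "k = 0"
    have "1 + ((b - a)/a) powr (r/r) = b/a" using a ab r by (simp add: field_simps)
    then show ?thesis using k a ab by (simp add: Theta_def mm ln_div)
  qed
  show "k > 0 \<Longrightarrow> ln (Theta r r k a b) = r * ln (b - a) + k * ln b - r * ln b"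
  proof -
    assume k: "k > 0"
    have bd: "b > 0" "b - a > 0" using a ab by auto
    show ?thesis
    proof (cases "k < 1")
      case True
      then have "Theta r r k a b = (b - a) powr r / b powr (r - k)"
        using k by (simp add: Theta_def mm)
      then show ?thesis using bd by (simp add: ln_div algebra_simps)
    next
      case False
      then have "Theta r r k a b = b powr k * (b - a) powr r / b powr r"
        using k by (simp add: Theta_def mm)
      then show ?thesis using bd by (simp add: ln_div ln_mult algebra_simps)
    qed
  qed
qed

lemma dbw:
  fixes a b :: real
  assumes a: "0 < a" and ab: "a < b"
  shows "ln (b - a) - ln b \<le> ln (min (ln b - ln a) 1)"
proof -
  have l1: "1 - a/b \<le> ln b - ln a"
    using ln_le_minus_one[of "a/b"] a ab by (simp add: ln_div)
  have l2: "1 - a/b \<le> 1" using a ab by simp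
  have "(b - a)/b = 1 - a/b" using a ab by (simp add: field_simps)
  then have "(b - a)/b \<le> min (ln b - ln a) 1" using l1 l2 by simp
  moreover have "(b - a)/b > 0" using a ab by simp
  ultimately have "ln ((b - a)/b) \<le> ln (min (ln b - ln a) 1)" by simp
  then show ?thesis using a ab by (simp add: ln_div)
qed


lemma ln_le_of: "0 < (t::real) \<Longrightarrow> t \<le> exp z \<Longrightarrow> ln t \<le> z"
  using ln_le_cancel_iff[of t "exp z"] by simp
lemma ge_ln_of: "0 < (t::real) \<Longrightarrow> exp z \<le> t \<Longrightarrow> z \<le> ln t"
  using ln_ge_iff by blast
lemma exp_le_of: "0 < (b::real) \<Longrightarrow> z \<le> ln b \<Longrightarrow> exp z \<le> b"
  using ln_ge_iff by blast
lemma le_exp_of: "0 < (a::real) \<Longrightarrow> ln a \<le> z \<Longrightarrow> a \<le> exp z"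
  using exp_le_cancel_iff[of "ln a" z] by simp

lemma params_lt:
  fixes p \<gamma> a b :: real
  assumes p: "p > 1" and a: "0 < a" and ab: "a < b"
  defines "\<kappa> \<equiv> 1 - (1+\<gamma>)/p"
  shows "\<exists>c w K. w > 0 \<and> K > 0 \<and> (\<forall>t\<in>{exp c..exp (c+w)}. t powr (1+\<gamma>-p) \<le> K) \<and>
     ((a = exp (c+w/2) \<and> b \<notin> {exp c<..<exp (c+w)}) \<or> (b = exp (c+w/2) \<and> a \<notin> {exp c<..<exp (c+w)})) \<and>
     Theta (1-1/p) (1-1/p) \<kappa> a b * (M0 powr p * w powr (1-p) * K) powr (1/p) \<le> M0 * exp (\<bar>\<kappa>\<bar>/2)"
proof -
  define r where "r = 1 - 1/p"
  define l where "l = ln b - ln a"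
  have p0: "p > 0" using p by simp
  have r0: "r > 0" using p by (simp add: r_def)
  have l0: "l > 0" using a ab by (simp add: l_def)
  have lam: "1 + \<gamma> - p = - p * \<kappa>" using p0 by (simp add: \<kappa>_def field_simps)
  have b0: "b > 0" "b - a > 0" using a ab by auto
  have M0p: "M0 > 0" using M0(1) by simp
  have lnX: "ln (M0 powr p * w powr (1-p) * K) / p = ln M0 - r * ln w + ln K / p"
    if "w > 0" "K > 0" for w K
    using that M0p p0 by (simp add: ln_mult r_def field_simps)
  have dbw': "ln (b - a) - ln b \<le> ln (min l 1)" using dbw[OF a ab] by (simp add: l_def)
  consider "\<kappa> < 0" | "\<kappa> = 0" | "\<kappa> > 0" by linarith
  then show ?thesis
  proof cases
    case 1
    define w where "w = min l 1"
    define c where "c = ln a - w/2"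
    define K where "K = exp (- p * \<kappa> * (c + w))"
    have w0: "w > 0" "w \<le> l" "w \<le> 1" using l0 by (auto simp: w_def)
    have K0: "K > 0" by (simp add: K_def)
    have Kb: "t powr (1+\<gamma>-p) \<le> K" if t: "t \<in> {exp c..exp (c+w)}" for t
    proof -
      have t0: "t > 0" using t by (auto intro: less_le_trans[OF exp_gt_zero])
      have "ln t \<le> c + w" using t t0 by (intro ln_le_of) auto
      then have "- p * \<kappa> * ln t \<le> - p * \<kappa> * (c + w)"
        using 1 p0 mult_pos_neg[OF p0 1] by (intro mult_left_mono) auto
      then show ?thesis using t0 by (simp add: powr_def lam K_def)
    qed
    have cen: "a = exp (c + w/2)" using a by (simp add: c_def)
    have out: "b \<notin> {exp c<..<exp (c+w)}"
    proof -
      have "c + w \<le> ln b" using w0 by (simp add: c_def l_def)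
      then have "exp (c + w) \<le> b" using b0 by (intro exp_le_of) auto
      then show ?thesis by auto
    qed
    have Th: "Theta (1-1/p) (1-1/p) \<kappa> a b = (b - a) powr r / (a powr (-\<kappa>) * b powr r)"
      using Theta_lt(1)[OF a ab, of r \<kappa>] r0 1 p by (simp add: r_def)
    have Th0: "Theta (1-1/p) (1-1/p) \<kappa> a b > 0" using Th a b0 by simp
    have lnTh: "ln (Theta (1-1/p) (1-1/p) \<kappa> a b) = r * ln (b - a) + \<kappa> * ln a - r * ln b"
      using Th a b0 by (simp add: ln_div ln_mult)
    have lnK: "ln K / p = - (\<kappa> * ln a) - \<kappa> * w / 2" using p0 by (simp add: K_def c_def field_simps)
    have i1: "r * (ln (b - a) - ln b - ln w) \<le> 0"
      using dbw' r0 by (intro mult_nonneg_nonpos) (auto simp: w_def)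
    then have i1': "r * ln (b - a) - r * ln b - r * ln w \<le> 0" by (simp add: algebra_simps)
    have i2: "- \<kappa> * w \<le> - \<kappa> * 1" using 1 w0 by (intro mult_left_mono) auto
    then have i2': "- (\<kappa> * w / 2) \<le> \<bar>\<kappa>\<bar>/2" using 1 by simp
    have "ln (Theta (1-1/p) (1-1/p) \<kappa> a b) + ln (M0 powr p * w powr (1-p) * K) / p \<le> ln M0 + \<bar>\<kappa>\<bar>/2"
      using lnTh lnX[OF w0(1) K0] lnK i1' i2' by linarith
    then have "Theta (1-1/p) (1-1/p) \<kappa> a b * (M0 powr p * w powr (1-p) * K) powr (1/p) \<le> M0 * exp (\<bar>\<kappa>\<bar>/2)"
      using Th0 w0 K0 M0p p0 by (intro ln_ineq_final) auto
    then show ?thesis using w0 K0 Kb cen out by blast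
  next
    case 2
    define w where "w = l"
    define c where "c = ln a - w/2"
    define K :: real where "K = 1"
    have w0: "w > 0" using l0 by (simp add: w_def)
    have K0: "K > 0" by (simp add: K_def)
    have Kb: "t powr (1+\<gamma>-p) \<le> K" if t: "t \<in> {exp c..exp (c+w)}" for t
    proof -
      have t0: "t > 0" using t by (auto intro: less_le_trans[OF exp_gt_zero])
      then show ?thesis using 2 by (simp add: lam K_def)
    qed
    have cen: "a = exp (c + w/2)" using a by (simp add: c_def)
    have out: "b \<notin> {exp c<..<exp (c+w)}"
    proof -
      have "c + w \<le> ln b" using w0 by (simp add: c_def w_def l_def)
      then have "exp (c + w) \<le> b" using b0 by (intro exp_le_of) auto
      then show ?thesis by auto
    qed
    have Th: "Theta (1-1/p) (1-1/p) \<kappa> a b = l powr r"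
      using Theta_lt(2)[OF a ab, of r \<kappa>] r0 2 p by (simp add: r_def l_def)
    have Th0: "Theta (1-1/p) (1-1/p) \<kappa> a b > 0" using Th l0 by simp
    have lnTh: "ln (Theta (1-1/p) (1-1/p) \<kappa> a b) = r * ln l"
      using Th l0 by simp
    have "ln (Theta (1-1/p) (1-1/p) \<kappa> a b) + ln (M0 powr p * w powr (1-p) * K) / p \<le> ln M0 + \<bar>\<kappa>\<bar>/2"
      using lnTh lnX[OF w0(1) K0] 2 by (simp add: K_def w_def)
    then have "Theta (1-1/p) (1-1/p) \<kappa> a b * (M0 powr p * w powr (1-p) * K) powr (1/p) \<le> M0 * exp (\<bar>\<kappa>\<bar>/2)"
      using Th0 w0 K0 M0p p0 by (intro ln_ineq_final) auto
    then show ?thesis using w0 K0 Kb cen out by blast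
  next
    case 3
    define w where "w = min l 1"
    define c where "c = ln b - w/2"
    define K where "K = exp (- p * \<kappa> * c)"
    have w0: "w > 0" "w \<le> l" "w \<le> 1" using l0 by (auto simp: w_def)
    have K0: "K > 0" by (simp add: K_def)
    have Kb: "t powr (1+\<gamma>-p) \<le> K" if t: "t \<in> {exp c..exp (c+w)}" for t
    proof -
      have t0: "t > 0" using t by (auto intro: less_le_trans[OF exp_gt_zero])
      have "c \<le> ln t" using t t0 by (intro ge_ln_of) auto
      then have "- p * \<kappa> * ln t \<le> - p * \<kappa> * c"
        using 3 p0 mult_pos_pos[OF p0 3] by (intro mult_left_mono_neg) auto
      then show ?thesis using t0 by (simp add: powr_def lam K_def)
    qed
    have cen: "b = exp (c + w/2)" using b0 by (simp add: c_def)
    have out: "a \<notin> {exp c<..<exp (c+w)}"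
    proof -
      have "ln a \<le> c" using w0 by (simp add: c_def l_def)
      then have "a \<le> exp c" using a by (intro le_exp_of) auto
      then show ?thesis by auto
    qed
    have Th0: "Theta (1-1/p) (1-1/p) \<kappa> a b > 0"
      using 3 a ab b0 by (auto simp: Theta_def)
    have lnTh: "ln (Theta (1-1/p) (1-1/p) \<kappa> a b) = r * ln (b - a) + \<kappa> * ln b - r * ln b"
      using Theta_lt(3)[OF a ab, of r \<kappa>] r0 3 p by (simp add: r_def)
    have lnK: "ln K / p = - (\<kappa> * ln b) + \<kappa> * w / 2" using p0 by (simp add: K_def c_def field_simps)
    have i1: "r * (ln (b - a) - ln b - ln w) \<le> 0"
      using dbw' r0 by (intro mult_nonneg_nonpos) (auto simp: w_def)
    then have i1': "r * ln (b - a) - r * ln b - r * ln w \<le> 0" by (simp add: algebra_simps)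
    have i2: "\<kappa> * w \<le> \<kappa> * 1" using 3 w0 by (intro mult_left_mono) auto
    then have i2': "\<kappa> * w / 2 \<le> \<bar>\<kappa>\<bar>/2" using 3 by simp
    have "ln (Theta (1-1/p) (1-1/p) \<kappa> a b) + ln (M0 powr p * w powr (1-p) * K) / p \<le> ln M0 + \<bar>\<kappa>\<bar>/2"
      using lnTh lnX[OF w0(1) K0] lnK i1' i2' by linarith
    then have "Theta (1-1/p) (1-1/p) \<kappa> a b * (M0 powr p * w powr (1-p) * K) powr (1/p) \<le> M0 * exp (\<bar>\<kappa>\<bar>/2)"
      using Th0 w0 K0 M0p p0 by (intro ln_ineq_final) auto
    then show ?thesis using w0 K0 Kb cen out by blast
  qed
qed


lemma Theta_diag: "Theta r r k x x = 0"
  by (simp add: Theta_def)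

theorem theorem1p3:
  fixes \<gamma> p :: real
  assumes "1 < p"
  shows "\<exists>C>0. \<forall>\<omega> :: real \<Rightarrow> real \<Rightarrow> real.
     (continuous_on ({0<..} \<times> {0<..}) (\<lambda>(x, y). \<omega> x y)
      \<and> (\<forall>x>0. \<forall>y>0. 0 \<le> \<omega> x y)
      \<and> (\<forall>u \<in> Cc_inf_pos. AE z in lborel. z \<in> {0<..} \<times> {0<..} \<longrightarrow>
            \<bar>u (fst z) - u (snd z)\<bar>
              \<le> \<omega> (fst z) (snd z) *
                 (integral {0<..} (\<lambda>t. \<bar>deriv u t\<bar> powr p * t powr \<gamma>)) powr (1 / p)))
     \<longrightarrow> (\<forall>x>0. \<forall>y>0.
            \<omega> x y \<ge> C * Theta (1 - 1/p) (1 - 1/p) (1 - (1 + \<gamma>)/p) x y)"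
proof -
  have p: "p > 1" using assms .
  have p0: "p > 0" using p by simp
  define \<kappa> where "\<kappa> = 1 - (1 + \<gamma>)/p"
  define C where "C = exp (-4) / (2 * M0 * exp (\<bar>\<kappa>\<bar>/2))"
  have M0p: "M0 > 0" using M0(1) by simp
  have C0: "C > 0" using M0p by (simp add: C_def)
  show ?thesis
  proof (intro exI[of _ C] conjI allI impI C0)
    fix \<omega> :: "real \<Rightarrow> real \<Rightarrow> real" and x y :: real
    assume H: "continuous_on ({0<..} \<times> {0<..}) (\<lambda>(x, y). \<omega> x y)
      \<and> (\<forall>x>0. \<forall>y>0. 0 \<le> \<omega> x y)
      \<and> (\<forall>u \<in> Cc_inf_pos. AE z in lborel. z \<in> {0<..} \<times> {0<..} \<longrightarrow>
            \<bar>u (fst z) - u (snd z)\<bar>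
              \<le> \<omega> (fst z) (snd z) *
                 (integral {0<..} (\<lambda>t. \<bar>deriv u t\<bar> powr p * t powr \<gamma>)) powr (1 / p))"
    assume x: "x > 0" and y: "y > 0"
    have wc: "continuous_on ({0<..} \<times> {0<..}) (\<lambda>(x, y). \<omega> x y)" using H by blast
    have wnn: "0 \<le> \<omega> x y" using H x y by blast
    have Hae: "\<And>u. u \<in> Cc_inf_pos \<Longrightarrow> AE z in lborel. z \<in> {0<..} \<times> {0<..} \<longrightarrow>
            \<bar>u (fst z) - u (snd z)\<bar>
              \<le> \<omega> (fst z) (snd z) *
                 (integral {0<..} (\<lambda>t. \<bar>deriv u t\<bar> powr p * t powr \<gamma>)) powr (1 / p)"
      using H by blast
    show "\<omega> x y \<ge> C * Theta (1 - 1/p) (1 - 1/p) (1 - (1 + \<gamma>)/p) x y"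
    proof (rule ccontr)
      assume "\<not> ?thesis"
      then have lt: "\<omega> x y < C * Theta (1 - 1/p) (1 - 1/p) \<kappa> x y" by (simp add: \<kappa>_def)
      have xy: "x \<noteq> y"
      proof
        assume "x = y"
        then show False using lt wnn by (simp add: Theta_diag)
      qed
      define a where "a = min x y"
      define b where "b = max x y"
      have a0: "a > 0" and ab: "a < b" using x y xy by (auto simp: a_def b_def)
      have Tab: "Theta (1 - 1/p) (1 - 1/p) \<kappa> x y = Theta (1 - 1/p) (1 - 1/p) \<kappa> a b"
        using Theta_sym[of "1 - 1/p" "1 - 1/p" \<kappa> x y] by (cases "x \<le> y") (auto simp: a_def b_def)
      obtain c w K where w0: "w > 0" and K0: "K > 0"
        and Kb: "\<forall>t\<in>{exp c..exp (c+w)}. t powr (1+\<gamma>-p) \<le> K"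
        and pos: "(a = exp (c+w/2) \<and> b \<notin> {exp c<..<exp (c+w)}) \<or> (b = exp (c+w/2) \<and> a \<notin> {exp c<..<exp (c+w)})"
        and TX: "Theta (1-1/p) (1-1/p) \<kappa> a b * (M0 powr p * w powr (1-p) * K) powr (1/p) \<le> M0 * exp (\<bar>\<kappa>\<bar>/2)"
        using params_lt[OF p a0 ab, of \<gamma>] unfolding \<kappa>_def by blast
      have posxy: "(x = exp (c+w/2) \<and> y \<notin> {exp c<..<exp (c+w)}) \<or> (y = exp (c+w/2) \<and> x \<notin> {exp c<..<exp (c+w)})"
        using pos by (cases "x \<le> y") (auto simp: a_def b_def)
      define u where "u = Gf c w 1 0 0"
      have uC: "u \<in> Cc_inf_pos" and ucont: "continuous_on UNIV u"
        and ucen: "u (exp (c + w/2)) = exp (-4)"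
        and uout: "\<And>t. t \<notin> {exp c<..<exp (c+w)} \<Longrightarrow> u t = 0"
        using u_facts[OF w0, where c=c] unfolding u_def by blast+
      have uxy: "\<bar>u x - u y\<bar> = exp (-4)"
        using posxy ucen uout by auto
      define I where "I = integral {0<..} (\<lambda>t. \<bar>deriv u t\<bar> powr p * t powr \<gamma>)"
      have I0: "0 \<le> I" and Ib: "I \<le> M0 powr p * w powr (1-p) * K"
        using integral_est[OF w0 p0, of c \<gamma> K] Kb unfolding I_def u_def by blast+
      define N where "N = I powr (1/p)"
      have N0: "0 \<le> N" by (simp add: N_def)
      have Nb: "N \<le> (M0 powr p * w powr (1-p) * K) powr (1/p)"
        unfolding N_def using I0 Ib p0 by (intro powr_mono2) auto
      have CT0: "0 \<le> C * Theta (1 - 1/p) (1 - 1/p) \<kappa> x y" using lt wnn by linarith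
      have "\<omega> x y * N \<le> C * Theta (1 - 1/p) (1 - 1/p) \<kappa> x y * N"
        using lt N0 by (intro mult_right_mono) auto
      also have "\<dots> \<le> C * Theta (1 - 1/p) (1 - 1/p) \<kappa> x y * (M0 powr p * w powr (1-p) * K) powr (1/p)"
        using CT0 Nb by (intro mult_left_mono) auto
      also have "\<dots> = C * (Theta (1-1/p) (1-1/p) \<kappa> a b * (M0 powr p * w powr (1-p) * K) powr (1/p))"
        using Tab by simp
      also have "\<dots> \<le> C * (M0 * exp (\<bar>\<kappa>\<bar>/2))"
        using TX C0 by (intro mult_left_mono) auto
      also have "\<dots> = exp (-4) / 2"
        using M0p by (simp add: C_def)
      finally have wN: "\<omega> x y * N \<le> exp (-4) / 2" .
      define S where "S = ({0<..} \<times> {0<..} :: (real \<times> real) set)"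
      define F where "F = (\<lambda>z. \<bar>u (fst z) - u (snd z)\<bar> - \<omega> (fst z) (snd z) * N)"
      have Sopen: "open S" unfolding S_def by (intro open_Times open_greaterThan)
      have wc': "continuous_on S (\<lambda>z. \<omega> (fst z) (snd z))"
      proof -
        have "(\<lambda>z. \<omega> (fst z) (snd z)) = (\<lambda>(x, y). \<omega> x y)" by auto
        then show ?thesis using wc unfolding S_def by metis
      qed
      have Fc: "continuous_on S F"
        unfolding F_def
        by (intro continuous_on_diff continuous_on_rabs continuous_on_mult continuous_on_const wc'
            continuous_on_compose2[OF ucont continuous_on_fst] continuous_on_compose2[OF ucont continuous_on_snd]
            continuous_on_id) auto
      have e4: "exp (-4::real) > 0" by simp
      have "\<omega> x y * N < exp (-4)" using wN e4 by linarith
      then have Fxy: "F (x, y) > 0" unfolding F_def using uxy by simp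
      have xyS: "(x, y) \<in> S" using x y by (simp add: S_def)
      have ae: "AE z in lborel. z \<in> S \<longrightarrow> F z \<le> 0"
        using Hae[OF uC] by eventually_elim (simp add: F_def S_def N_def I_def)
      show False by (rule ae_open_contra[OF Sopen Fc xyS Fxy ae])
    qed
  qed
qed

end
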